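(* Assume (A1)–(A3), the latent index model (LI), $\Gamma^{Wald}\succ0$, and let $\omega^{PRTE}$ be as defined below. Let $e(u)=\bar h(u;\omega^{PRTE})-w^P(u)$, which satisfies $\int_0^1e(u)du=0$, and let $\Delta=\beta^*(\omega^{PRTE})-\mathrm{PRTE}=\int_0^1\mathrm{MTE}(u)e(u)du$, where $\mathrm{PRTE}=\int_0^1\mathrm{MTE}(u)w^P(u)du$. (a) If $|\mathrm{MTE}(u)-\mathrm{MTE}(v)|\le M|u-v|$ for all $u,v\in[0,1]$, then $|\Delta|\le\frac{M}{2\sqrt3}\|e\|_{L^2}$. (b) Let $\mathcal M$ be a set of pairs of marginal treatment response functions $(m_0,m_1)$ on $[0,1]$ (with $\mathrm{MTE}=m_1-m_0$) that contains the true pair, and let $\mathcal M_S=\{(m_0,m_1)\in\mathcal M:\int_0^1[m_1(u)-m_0(u)]h_\ell(u)du=\mathrm{Wald}_\ell\ \forall\ell\}$. Then $\Delta\in[\inf_{(m_0,m_1)\in\mathcal M_S}\Delta,\ \sup_{(m_0,m_1)\in\mathcal M_S}\Delta]$, where $\Delta$ on the right is the functional $\int_0^1[m_1(u)-m_0(u)]e(u)du$.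
   Context: Observe i.i.d. $(Y_i,D_i,\mathbf Z_i)$, $Y_i\in\mathbb R$, $D_i\in\{0,1\}$, $\mathbf Z_i\in\{0,1\}^L$, $L\ge2$; potential outcomes $Y_i(0),Y_i(1)$, compliance type $D_i(\cdot):\{0,1\}^L\to\{0,1\}$, $D_i=D_i(\mathbf Z_i)$, $Y_i=D_iY_i(1)+(1-D_i)Y_i(0)$. $p_\ell=P(Z_{\ell i}=1)$, $\pi_\ell,\rho_\ell$ the differences of $\mathbb E[D_i\mid Z_{\ell i}=z]$, $\mathbb E[Y_i\mid Z_{\ell i}=z]$ between $z=1,0$, $\mathrm{Wald}_\ell=\rho_\ell/\pi_\ell$, $\gamma_\ell=\mathrm{Cov}(D_i,Z_{\ell i})$, $\Sigma_Z=\mathrm{Var}(\mathbf Z_i)$, $\beta^*(\omega)=\sum_\ell\omega_\ell\mathrm{Wald}_\ell$. $\Gamma^{Wald}_{\ell k}=\mathbb E[\tilde\epsilon_{i,\ell}\tilde\epsilon_{i,k}(Z_{\ell i}-p_\ell)(Z_{ki}-p_k)]/(\gamma_\ell\gamma_k)$, $\tilde\epsilon_{i,\ell}=Y_i-\mathrm{Wald}_\ell D_i-(\mathbb E[Y_i]-\mathrm{Wald}_\ell\mathbb E[D_i])$. (LI): $D_i=\mathbf 1\{V(\mathbf Z_i)\ge U_i\}$, $U_i\sim\mathrm{Uniform}(0,1)$ conditional on potential outcomes; $p(z)=V(z)$; $\mathrm{MTE}(u)=\mathbb E[Y_i(1)-Y_i(0)\mid U_i=u]$; $h_\ell(u)=\frac{P(p(\mathbf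 Z_i)\ge u\mid Z_{\ell i}=1)-P(p(\mathbf Z_i)\ge u\mid Z_{\ell i}=0)}{\mathbb E[p(\mathbf Z_i)\mid Z_{\ell i}=1]-\mathbb E[p(\mathbf Z_i)\mid Z_{\ell i}=0]}$, $\bar h(u;\omega)=\sum_\ell\omega_\ell h_\ell(u)$. For a policy moving the instrument distribution from $F_0$ to $F_1$, $w^P(u)=(F_0(u)-F_1(u))/\int_0^1(F_0-F_1)$ with $F_j(u)=P(p(\mathbf Z_i)\ge u\mid\text{policy }j)$. $\omega^{PRTE}$ is the unique minimizer of $\omega'\Gamma^{Wald}\omega$ over $\mathcal S=\arg\min_{\omega\in\Delta^{L-1}}\int_0^1[\bar h(u;\omega)-w^P(u)]^2du$, $\Delta^{L-1}$ the probability simplex. Assumptions: (A1) $(Y_i(0),Y_i(1),D_i(\cdot))$ independent of $\mathbf Z_i$. (A2) $D_i(z)$ nondecreasing in each coordinate for every $i$. (A3) $p_\ell>0$, $\pi_\ell>0$ for all $\ell$; $\Sigma_Z$ positive definite. *)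

theory Defs
  imports "HOL-Probability.Probability"
begin

text \<open>Instruments Z take values in 'L \<Rightarrow> bool (i.e. {0,1}^L with L = CARD('L)).
  V is the index function, which equals the propensity score p.\<close>

type_synonym 'L instr = "'L \<Rightarrow> bool"

definition Dobs :: "('L instr \<Rightarrow> real) \<Rightarrow> ('a \<Rightarrow> real) \<Rightarrow> ('a \<Rightarrow> 'L instr) \<Rightarrow> 'a \<Rightarrow> real"
  where "Dobs V U Z = (\<lambda>x. if U x \<le> V (Z x) then 1 else 0)"

definition Yobs :: "('L instr \<Rightarrow> real) \<Rightarrow> ('a \<Rightarrow> real) \<Rightarrow> ('a \<Rightarrow> 'L instr)
    \<Rightarrow> ('a \<Rightarrow> real) \<Rightarrow> ('a \<Rightarrow> real) \<Rightarrow> 'a \<Rightarrow> real"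
  where "Yobs V U Z Y0 Y1 = (\<lambda>x. Dobs V U Z x * Y1 x + (1 - Dobs V U Z x) * Y0 x)"

definition Zr :: "('a \<Rightarrow> 'L instr) \<Rightarrow> 'L \<Rightarrow> 'a \<Rightarrow> real"
  where "Zr Z l = (\<lambda>x. if Z x l then 1 else 0)"

definition cexp_ev :: "'a measure \<Rightarrow> ('a \<Rightarrow> real) \<Rightarrow> 'a set \<Rightarrow> real"
  where "cexp_ev M X A = (\<integral>x. indicator A x * X x \<partial>M) / measure M A"

definition pz :: "'a measure \<Rightarrow> ('a \<Rightarrow> 'L instr) \<Rightarrow> 'L \<Rightarrow> real"
  where "pz M Z l = measure M {x \<in> space M. Z x l}"

definition diffZ :: "'a measure \<Rightarrow> ('a \<Rightarrow> 'L instr) \<Rightarrow> ('a \<Rightarrow> real) \<Rightarrow> 'L \<Rightarrow> real"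
  where "diffZ M Z X l = cexp_ev M X {x \<in> space M. Z x l} - cexp_ev M X {x \<in> space M. \<not> Z x l}"

definition covar :: "'a measure \<Rightarrow> ('a \<Rightarrow> real) \<Rightarrow> ('a \<Rightarrow> real) \<Rightarrow> real"
  where "covar M X W = (\<integral>x. X x * W x \<partial>M) - (\<integral>x. X x \<partial>M) * (\<integral>x. W x \<partial>M)"

definition pi_fs :: "'a measure \<Rightarrow> ('L instr \<Rightarrow> real) \<Rightarrow> ('a \<Rightarrow> real) \<Rightarrow> ('a \<Rightarrow> 'L instr) \<Rightarrow> 'L \<Rightarrow> real"
  where "pi_fs M V U Z l = diffZ M Z (Dobs V U Z) l"

definition rho_rf :: "'a measure \<Rightarrow> ('L instr \<Rightarrow> real) \<Rightarrow> ('a \<Rightarrow> real) \<Rightarrow> ('a \<Rightarrow> 'L instr)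
    \<Rightarrow> ('a \<Rightarrow> real) \<Rightarrow> ('a \<Rightarrow> real) \<Rightarrow> 'L \<Rightarrow> real"
  where "rho_rf M V U Z Y0 Y1 l = diffZ M Z (Yobs V U Z Y0 Y1) l"

definition Wald :: "'a measure \<Rightarrow> ('L instr \<Rightarrow> real) \<Rightarrow> ('a \<Rightarrow> real) \<Rightarrow> ('a \<Rightarrow> 'L instr)
    \<Rightarrow> ('a \<Rightarrow> real) \<Rightarrow> ('a \<Rightarrow> real) \<Rightarrow> 'L \<Rightarrow> real"
  where "Wald M V U Z Y0 Y1 l = rho_rf M V U Z Y0 Y1 l / pi_fs M V U Z l"

definition gammaZ :: "'a measure \<Rightarrow> ('L instr \<Rightarrow> real) \<Rightarrow> ('a \<Rightarrow> real) \<Rightarrow> ('a \<Rightarrow> 'L instr) \<Rightarrow> 'L \<Rightarrow> real"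
  where "gammaZ M V U Z l = covar M (Dobs V U Z) (Zr Z l)"

definition SigmaZ_pd :: "'a measure \<Rightarrow> ('a \<Rightarrow> ('L::finite) instr) \<Rightarrow> bool"
  where "SigmaZ_pd M Z = (\<forall>c::'L \<Rightarrow> real. c \<noteq> (\<lambda>_. 0) \<longrightarrow>
            0 < (\<Sum>l\<in>UNIV. \<Sum>k\<in>UNIV. c l * c k * covar M (Zr Z l) (Zr Z k)))"

definition eps_tilde :: "'a measure \<Rightarrow> ('L instr \<Rightarrow> real) \<Rightarrow> ('a \<Rightarrow> real) \<Rightarrow> ('a \<Rightarrow> 'L instr)
    \<Rightarrow> ('a \<Rightarrow> real) \<Rightarrow> ('a \<Rightarrow> real) \<Rightarrow> 'L \<Rightarrow> 'a \<Rightarrow> real"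
  where "eps_tilde M V U Z Y0 Y1 l = (\<lambda>x.
     Yobs V U Z Y0 Y1 x - Wald M V U Z Y0 Y1 l * Dobs V U Z x
     - ((\<integral>y. Yobs V U Z Y0 Y1 y \<partial>M) - Wald M V U Z Y0 Y1 l * (\<integral>y. Dobs V U Z y \<partial>M)))"

definition GammaWald :: "'a measure \<Rightarrow> ('L instr \<Rightarrow> real) \<Rightarrow> ('a \<Rightarrow> real) \<Rightarrow> ('a \<Rightarrow> 'L instr)
    \<Rightarrow> ('a \<Rightarrow> real) \<Rightarrow> ('a \<Rightarrow> real) \<Rightarrow> 'L \<Rightarrow> 'L \<Rightarrow> real"
  where "GammaWald M V U Z Y0 Y1 l k =
     (\<integral>x. eps_tilde M V U Z Y0 Y1 l x * eps_tilde M V U Z Y0 Y1 k x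
           * (Zr Z l x - pz M Z l) * (Zr Z k x - pz M Z k) \<partial>M)
     / (gammaZ M V U Z l * gammaZ M V U Z k)"

definition quadform :: "('L::finite \<Rightarrow> 'L \<Rightarrow> real) \<Rightarrow> ('L \<Rightarrow> real) \<Rightarrow> real"
  where "quadform G w = (\<Sum>l\<in>UNIV. \<Sum>k\<in>UNIV. w l * w k * G l k)"

definition pos_def :: "('L::finite \<Rightarrow> 'L \<Rightarrow> real) \<Rightarrow> bool"
  where "pos_def G = (\<forall>w. w \<noteq> (\<lambda>_. 0) \<longrightarrow> 0 < quadform G w)"

definition beta_star :: "'a measure \<Rightarrow> ('L instr \<Rightarrow> real) \<Rightarrow> ('a \<Rightarrow> real) \<Rightarrow> ('a \<Rightarrow> ('L::finite) instr)
    \<Rightarrow> ('a \<Rightarrow> real) \<Rightarrow> ('a \<Rightarrow> real) \<Rightarrow> ('L \<Rightarrow> real) \<Rightarrow> real"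
  where "beta_star M V U Z Y0 Y1 w = (\<Sum>l\<in>UNIV. w l * Wald M V U Z Y0 Y1 l)"

definition hfun :: "'a measure \<Rightarrow> ('L instr \<Rightarrow> real) \<Rightarrow> ('a \<Rightarrow> 'L instr) \<Rightarrow> 'L \<Rightarrow> real \<Rightarrow> real"
  where "hfun M V Z l u =
     diffZ M Z (\<lambda>x. if u \<le> V (Z x) then 1 else 0) l / diffZ M Z (\<lambda>x. V (Z x)) l"

definition hbar :: "'a measure \<Rightarrow> ('L instr \<Rightarrow> real) \<Rightarrow> ('a \<Rightarrow> ('L::finite) instr) \<Rightarrow> ('L \<Rightarrow> real) \<Rightarrow> real \<Rightarrow> real"
  where "hbar M V Z w u = (\<Sum>l\<in>UNIV. w l * hfun M V Z l u)"

text \<open>Policy j induces instrument distribution Q_j; F_j(u) = P(p(Z) \<ge> u | policy j).\<close>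
definition Fpol :: "('L instr \<Rightarrow> real) \<Rightarrow> 'L instr pmf \<Rightarrow> real \<Rightarrow> real"
  where "Fpol V Q u = measure_pmf.prob Q {z. u \<le> V z}"

definition wP :: "('L instr \<Rightarrow> real) \<Rightarrow> 'L instr pmf \<Rightarrow> 'L instr pmf \<Rightarrow> real \<Rightarrow> real"
  where "wP V Q0 Q1 u = (Fpol V Q0 u - Fpol V Q1 u)
            / (LINT t:{0..1}|lborel. Fpol V Q0 t - Fpol V Q1 t)"

definition prob_simplex :: "('L::finite \<Rightarrow> real) set"
  where "prob_simplex = {w. (\<forall>l. 0 \<le> w l) \<and> sum w UNIV = 1}"

definition Jfit :: "'a measure \<Rightarrow> ('L instr \<Rightarrow> real) \<Rightarrow> ('a \<Rightarrow> ('L::finite) instr)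
    \<Rightarrow> 'L instr pmf \<Rightarrow> 'L instr pmf \<Rightarrow> ('L \<Rightarrow> real) \<Rightarrow> real"
  where "Jfit M V Z Q0 Q1 w = (LINT u:{0..1}|lborel. (hbar M V Z w u - wP V Q0 Q1 u)\<^sup>2)"

definition Sset :: "'a measure \<Rightarrow> ('L instr \<Rightarrow> real) \<Rightarrow> ('a \<Rightarrow> ('L::finite) instr)
    \<Rightarrow> 'L instr pmf \<Rightarrow> 'L instr pmf \<Rightarrow> ('L \<Rightarrow> real) set"
  where "Sset M V Z Q0 Q1 = {w \<in> prob_simplex. \<forall>w' \<in> prob_simplex. Jfit M V Z Q0 Q1 w \<le> Jfit M V Z Q0 Q1 w'}"

definition is_omega_PRTE :: "'a measure \<Rightarrow> ('L instr \<Rightarrow> real) \<Rightarrow> ('a \<Rightarrow> real) \<Rightarrow> ('a \<Rightarrow> ('L::finite) instr)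
    \<Rightarrow> ('a \<Rightarrow> real) \<Rightarrow> ('a \<Rightarrow> real) \<Rightarrow> 'L instr pmf \<Rightarrow> 'L instr pmf \<Rightarrow> ('L \<Rightarrow> real) \<Rightarrow> bool"
  where "is_omega_PRTE M V U Z Y0 Y1 Q0 Q1 w =
     (w \<in> Sset M V Z Q0 Q1 \<and>
      (\<forall>w' \<in> Sset M V Z Q0 Q1. quadform (GammaWald M V U Z Y0 Y1) w \<le> quadform (GammaWald M V U Z Y0 Y1) w'))"

definition efun :: "'a measure \<Rightarrow> ('L instr \<Rightarrow> real) \<Rightarrow> ('a \<Rightarrow> ('L::finite) instr)
    \<Rightarrow> 'L instr pmf \<Rightarrow> 'L instr pmf \<Rightarrow> ('L \<Rightarrow> real) \<Rightarrow> real \<Rightarrow> real"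
  where "efun M V Z Q0 Q1 w u = hbar M V Z w u - wP V Q0 Q1 u"

definition indep_rvs :: "'a measure \<Rightarrow> 'b measure \<Rightarrow> ('a \<Rightarrow> 'b) \<Rightarrow> 'c measure \<Rightarrow> ('a \<Rightarrow> 'c) \<Rightarrow> bool"
  where "indep_rvs M Ma X Mb W =
     (X \<in> measurable M Ma \<and> W \<in> measurable M Mb \<and>
      (\<forall>A \<in> sets Ma. \<forall>B \<in> sets Mb.
         measure M (X -` A \<inter> W -` B \<inter> space M) = measure M (X -` A \<inter> space M) * measure M (W -` B \<inter> space M)))"

definition is_cond_mean_given :: "'a measure \<Rightarrow> ('a \<Rightarrow> real) \<Rightarrow> ('a \<Rightarrow> real) \<Rightarrow> (real \<Rightarrow> real) \<Rightarrow> bool"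
  where "is_cond_mean_given M U X m =
     (m \<in> borel_measurable borel \<and>
      (AE x in M. real_cond_exp M (vimage_algebra (space M) U borel) X x = m (U x)))"

end

theory Submission
  imports Defs
begin

lemma indep_int:
  fixes W :: "'a \<Rightarrow> real \<times> real \<times> real" and Z :: "'a \<Rightarrow> 'z" and g :: "real \<times> real \<times> real \<Rightarrow> real"
  assumes P: "prob_space M" and I: "indep_rvs M (borel \<Otimes>\<^sub>M borel \<Otimes>\<^sub>M borel) W (count_space UNIV) Z"
   and g: "g \<in> borel_measurable (borel \<Otimes>\<^sub>M borel \<Otimes>\<^sub>M borel)" and int: "integrable M (\<lambda>x. g (W x))"
  shows "(\<integral>x. g (W x) * indicator {z} (Z x) \<partial>M) = (\<integral>x. g (W x) \<partial>M) * measure M {x\<in>space M. Z x = z}"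
proof -
  interpret prob_space M by (rule P)
  let ?S = "borel \<Otimes>\<^sub>M borel \<Otimes>\<^sub>M borel :: (real \<times> real \<times> real) measure"
  define GW where "GW = (\<lambda>x. g (W x))"
  define IZ where "IZ = (\<lambda>x. indicator {z} (Z x) :: real)"
  have Wm: "W \<in> measurable M ?S" and Zm: "Z \<in> measurable M (count_space UNIV)"
    and pr: "\<And>A B. A \<in> sets ?S \<Longrightarrow> B \<in> sets (count_space UNIV) \<Longrightarrow>
         measure M (W -` A \<inter> Z -` B \<inter> space M) = measure M (W -` A \<inter> space M) * measure M (Z -` B \<inter> space M)"
    using I by (auto simp: indep_rvs_def)
  have GWm: "GW \<in> borel_measurable M" unfolding GW_def using Wm g by measurable
  have IZm: "IZ \<in> borel_measurable M" unfolding IZ_def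
    by (rule measurable_compose[OF Zm, of "\<lambda>y. indicator {z} y"]) (simp add: measurable_count_space_eq1)
  have iv: "indep_var borel GW borel IZ"
    unfolding indep_var_eq
  proof (intro conjI)
    show "random_variable borel GW" using GWm by simp
    show "random_variable borel IZ" using IZm by simp
    show "indep_set (sigma_sets (space M) {GW -` A \<inter> space M |A. A \<in> sets borel})
        (sigma_sets (space M) {IZ -` A \<inter> space M |A. A \<in> sets borel})"
    proof (rule indep_set_sigma_sets)
      show "indep_set {GW -` A \<inter> space M |A. A \<in> sets borel} {IZ -` A \<inter> space M |A. A \<in> sets borel}"
      proof (rule indep_setI)
        show "{GW -` A \<inter> space M |A. A \<in> sets borel} \<subseteq> events" using GWm by (auto simp: measurable_sets)
        show "{IZ -` A \<inter> space M |A. A \<in> sets borel} \<subseteq> events" using IZm by (auto simp: measurable_sets)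
      next
        fix a b assume "a \<in> {GW -` A \<inter> space M |A. A \<in> sets borel}" "b \<in> {IZ -` A \<inter> space M |A. A \<in> sets borel}"
        then obtain A B where a: "a = GW -` A \<inter> space M" "A \<in> sets borel" and b: "b = IZ -` B \<inter> space M" "B \<in> sets borel" by blast
        define A' where "A' = g -` A \<inter> space ?S"
        define B' where "B' = (\<lambda>y. indicator {z} y :: real) -` B"
        have A': "A' \<in> sets ?S" unfolding A'_def using g a(2) by (rule measurable_sets)
        have B': "B' \<in> sets (count_space UNIV)" by simp
        have "a = W -` A' \<inter> space M" unfolding a A'_def GW_def using Wm by (auto simp: measurable_def)
        moreover have "b = Z -` B' \<inter> space M" unfolding b B'_def IZ_def by auto
        ultimately have "a \<inter> b = W -` A' \<inter> Z -` B' \<inter> space M" "a = W -` A' \<inter> space M" "b = Z -` B' \<inter> space M" by auto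
        then show "prob (a \<inter> b) = prob a * prob b" using pr[OF A' B'] by simp
      qed
      show "Int_stable {GW -` A \<inter> space M |A. A \<in> sets borel}"
        unfolding Int_stable_def
      proof (intro ballI)
        fix a b assume "a \<in> {GW -` A \<inter> space M |A. A \<in> sets borel}" "b \<in> {GW -` A \<inter> space M |A. A \<in> sets borel}"
        then obtain A B where "a = GW -` A \<inter> space M" "A \<in> sets borel" "b = GW -` B \<inter> space M" "B \<in> sets borel" by blast
        then show "a \<inter> b \<in> {GW -` A \<inter> space M |A. A \<in> sets borel}"
          by (intro CollectI exI[of _ "A \<inter> B"]) auto
      qed
      show "Int_stable {IZ -` A \<inter> space M |A. A \<in> sets borel}"
        unfolding Int_stable_def
      proof (intro ballI)
        fix a b assume "a \<in> {IZ -` A \<inter> space M |A. A \<in> sets borel}" "b \<in> {IZ -` A \<inter> space M |A. A \<in> sets borel}"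
        then obtain A B where "a = IZ -` A \<inter> space M" "A \<in> sets borel" "b = IZ -` B \<inter> space M" "B \<in> sets borel" by blast
        then show "a \<inter> b \<in> {IZ -` A \<inter> space M |A. A \<in> sets borel}"
          by (intro CollectI exI[of _ "A \<inter> B"]) auto
      qed
    qed
  qed
  moreover have "integrable M IZ"
    using IZm by (intro integrable_const_bound[where B=1]) (auto simp: IZ_def indicator_def)
  ultimately have "(\<integral>x. GW x * IZ x \<partial>M) = (\<integral>x. GW x \<partial>M) * (\<integral>x. IZ x \<partial>M)"
    using int unfolding GW_def by (intro indep_var_lebesgue_integral) auto
  moreover have "(\<integral>x. IZ x \<partial>M) = (\<integral>x. indicator {x\<in>space M. Z x = z} x \<partial>M)"
    unfolding IZ_def by (intro Bochner_Integration.integral_cong) (auto simp: indicator_def)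
  moreover have "{x\<in>space M. Z x = z} \<in> sets M" using measurable_sets[OF Zm, of "{z}"] by (simp add: vimage_def Int_def conj_commute)
  ultimately show ?thesis by (simp add: GW_def IZ_def)
qed

lemma ind_meas:
  assumes Zm: "Z \<in> measurable M (count_space UNIV)"
  shows "(\<lambda>x. indicator {z} (Z x) :: real) \<in> borel_measurable M"
  by (rule measurable_compose[OF Zm, of "\<lambda>y. indicator {z} y"]) (simp add: measurable_count_space_eq1)

lemma fun_meas:
  assumes Zm: "Z \<in> measurable M (count_space UNIV)"
  shows "(\<lambda>x. F (Z x) :: real) \<in> borel_measurable M"
  by (rule measurable_compose[OF Zm, of F]) (simp add: measurable_count_space_eq1)

lemma fin_int:
  fixes Z :: "'a \<Rightarrow> 'z::finite" and F :: "'z \<Rightarrow> real"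
  assumes P: "prob_space M" and Zm: "Z \<in> measurable M (count_space UNIV)"
  shows "(\<integral>x. F (Z x) \<partial>M) = (\<Sum>z\<in>UNIV. measure M {x\<in>space M. Z x = z} * F z)"
proof -
  interpret prob_space M by (rule P)
  have "(\<integral>x. F (Z x) \<partial>M) = (\<integral>x. (\<Sum>z\<in>UNIV. indicator {z} (Z x) * F z) \<partial>M)"
  proof (intro Bochner_Integration.integral_cong refl)
    fix x
    have "(\<Sum>z\<in>UNIV. indicator {z} (Z x) * F z) = (\<Sum>z\<in>UNIV. if z = Z x then F z else 0)"
      by (intro sum.cong) (auto simp: indicator_def)
    also have "\<dots> = F (Z x)" by simp
    finally show "F (Z x) = (\<Sum>z\<in>UNIV. indicator {z} (Z x) * F z)" by simp
  qed
  also have "\<dots> = (\<Sum>z\<in>UNIV. (\<integral>x. indicator {z} (Z x) * F z \<partial>M))"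
  proof (rule Bochner_Integration.integral_sum)
    fix z
    show "integrable M (\<lambda>x. indicator {z} (Z x) * F z)"
      using ind_meas[OF Zm, of z] by (intro integrable_mult_left integrable_const_bound[where B=1]) (auto simp: indicator_def)
  qed
  also have "\<dots> = (\<Sum>z\<in>UNIV. (\<integral>x. indicator {z} (Z x) \<partial>M) * F z)" by simp
  also have "\<dots> = (\<Sum>z\<in>UNIV. measure M {x\<in>space M. Z x = z} * F z)"
  proof (intro sum.cong refl arg_cong2[where f="(*)"])
    fix z
    have "(\<integral>x. indicator {z} (Z x) \<partial>M) = (\<integral>x. indicator {x\<in>space M. Z x = z} x \<partial>M :: real)"
      by (intro Bochner_Integration.integral_cong) (auto simp: indicator_def)
    moreover have "{x\<in>space M. Z x = z} \<in> sets M"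
      using measurable_sets[OF Zm, of "{z}"] by (simp add: vimage_def Int_def conj_commute)
    ultimately show "(\<integral>x. indicator {z} (Z x) \<partial>M) = measure M {x\<in>space M. Z x = z}" by simp
  qed
  finally show ?thesis .
qed

lemma indep_int2:
  fixes W :: "'a \<Rightarrow> real \<times> real \<times> real" and Z :: "'a \<Rightarrow> 'z::finite"
    and Phi :: "real \<times> real \<times> real \<Rightarrow> 'z \<Rightarrow> real" and G :: "'z \<Rightarrow> real"
  assumes P: "prob_space M" and I: "indep_rvs M (borel \<Otimes>\<^sub>M borel \<Otimes>\<^sub>M borel) W (count_space UNIV) Z"
   and g: "\<And>z. (\<lambda>w. Phi w z) \<in> borel_measurable (borel \<Otimes>\<^sub>M borel \<Otimes>\<^sub>M borel)"
   and int: "\<And>z. integrable M (\<lambda>x. Phi (W x) z)"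
  shows "(\<integral>x. Phi (W x) (Z x) * G (Z x) \<partial>M) = (\<integral>x. (\<integral>y. Phi (W y) (Z x) \<partial>M) * G (Z x) \<partial>M)"
proof -
  interpret prob_space M by (rule P)
  have Zm: "Z \<in> measurable M (count_space UNIV)" and Wm: "W \<in> measurable M (borel \<Otimes>\<^sub>M borel \<Otimes>\<^sub>M borel)"
    using I by (auto simp: indep_rvs_def)
  have "(\<integral>x. Phi (W x) (Z x) * G (Z x) \<partial>M) = (\<integral>x. (\<Sum>z\<in>UNIV. G z * (Phi (W x) z * indicator {z} (Z x))) \<partial>M)"
  proof (intro Bochner_Integration.integral_cong refl)
    fix x
    have "(\<Sum>z\<in>UNIV. G z * (Phi (W x) z * indicator {z} (Z x))) = (\<Sum>z\<in>UNIV. if z = Z x then G z * Phi (W x) z else 0)"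
      by (intro sum.cong) (auto simp: indicator_def)
    also have "\<dots> = Phi (W x) (Z x) * G (Z x)" by simp
    finally show "Phi (W x) (Z x) * G (Z x) = (\<Sum>z\<in>UNIV. G z * (Phi (W x) z * indicator {z} (Z x)))" by simp
  qed
  also have "\<dots> = (\<Sum>z\<in>UNIV. (\<integral>x. G z * (Phi (W x) z * indicator {z} (Z x)) \<partial>M))"
  proof (rule Bochner_Integration.integral_sum)
    fix z
    have m: "(\<lambda>x. Phi (W x) z) \<in> borel_measurable M" using measurable_compose[OF Wm g] by simp
    show "integrable M (\<lambda>x. G z * (Phi (W x) z * indicator {z} (Z x)))"
      using ind_meas[OF Zm, of z] m
      by (intro integrable_mult_right Bochner_Integration.integrable_bound[OF int[of z]]) (auto simp: indicator_def)
  qed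
  also have "\<dots> = (\<Sum>z\<in>UNIV. G z * (\<integral>x. Phi (W x) z * indicator {z} (Z x) \<partial>M))" by simp
  also have "\<dots> = (\<Sum>z\<in>UNIV. G z * ((\<integral>x. Phi (W x) z \<partial>M) * measure M {x\<in>space M. Z x = z}))"
    by (intro sum.cong refl arg_cong2[where f="(*)"] indep_int[OF P I g int])
  also have "\<dots> = (\<integral>x. (\<integral>y. Phi (W y) (Z x) \<partial>M) * G (Z x) \<partial>M)"
    by (subst fin_int[OF P Zm]) (simp add: ac_simps)
  finally show ?thesis .
qed

lemma unif_density: "uniform_measure lborel {0..1::real} = density lborel (\<lambda>x. ennreal (indicator {0..1} x))"
  unfolding uniform_measure_def by (simp add: ennreal_indicator divide_ennreal_def)

lemma U_int:
  assumes Um: "U \<in> borel_measurable M" and Uu: "distr M lborel U = uniform_measure lborel {0..1}"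
    and g: "(g :: real \<Rightarrow> real) \<in> borel_measurable borel"
  shows "(\<integral>x. g (U x) \<partial>M) = (LINT u:{0..1}|lborel. g u)"
proof -
  have "(\<integral>x. g (U x) \<partial>M) = integral\<^sup>L (distr M lborel U) g"
    using Um g by (subst integral_distr) auto
  also have "\<dots> = integral\<^sup>L (density lborel (\<lambda>x. ennreal (indicator {0..1} x))) g"
    using Uu unif_density by simp
  also have "\<dots> = (\<integral>x. indicator {0..1} x *\<^sub>R g x \<partial>lborel)"
    using g by (subst integral_density) auto
  finally show ?thesis by (simp add: set_lebesgue_integral_def)
qed

lemma U_integrable:
  assumes Um: "U \<in> borel_measurable M" and Uu: "distr M lborel U = uniform_measure lborel {0..1}"
    and g: "(g :: real \<Rightarrow> real) \<in> borel_measurable borel" and i: "integrable M (\<lambda>x. g (U x))"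
  shows "set_integrable lborel {0..1} g"
proof -
  have "integrable (distr M lborel U) g"
    using Um g i by (subst integrable_distr_eq) auto
  then have "integrable (density lborel (\<lambda>x. ennreal (indicator {0..1} x))) g"
    using Uu unif_density by simp
  then show ?thesis
    using g by (subst (asm) integrable_density) (auto simp: set_integrable_def)
qed

lemma cond_int:
  assumes P: "prob_space M" and Um: "U \<in> borel_measurable M" and Uu: "distr M lborel U = uniform_measure lborel {0..1}"
    and Ym: "Y \<in> borel_measurable M" and Yi: "integrable M Y" and md: "is_cond_mean_given M U Y m"
  shows "(\<integral>x. indicator {..c} (U x) * Y x \<partial>M) = (LINT u:{0..1}|lborel. indicator {..c} u * m u)"
    and "set_integrable lborel {0..1} m"
proof -
  interpret prob_space M by (rule P)
  define F where "F = vimage_algebra (space M) U borel"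
  have mm: "m \<in> borel_measurable borel" and AEm: "AE x in M. real_cond_exp M F Y x = m (U x)"
    using md unfolding is_cond_mean_given_def F_def by auto
  have sub: "subalgebra M F"
    unfolding subalgebra_def F_def
    using Um by (auto simp: sets_vimage_algebra2 measurable_sets)
  interpret finite_measure_subalgebra M F
    by unfold_locales (rule sub)
  have A: "U -` {..c} \<inter> space M \<in> sets F" unfolding F_def by (rule in_vimage_algebra) simp
  have "(\<integral>x \<in> U -` {..c} \<inter> space M. Y x \<partial>M) = (\<integral>x \<in> U -` {..c} \<inter> space M. real_cond_exp M F Y x \<partial>M)"
    by (rule real_cond_exp_intA[OF Yi A])
  also have "\<dots> = (\<integral>x. indicator {..c} (U x) * m (U x) \<partial>M)"
    unfolding set_lebesgue_integral_def
  proof (rule integral_cong_AE)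
    show "(\<lambda>x. indicator (U -` {..c} \<inter> space M) x *\<^sub>R real_cond_exp M F Y x) \<in> borel_measurable M"
      using Um by measurable
    show "(\<lambda>x. indicator {..c} (U x) * m (U x)) \<in> borel_measurable M" using Um mm by measurable
    show "AE x in M. indicator (U -` {..c} \<inter> space M) x *\<^sub>R real_cond_exp M F Y x = indicator {..c} (U x) * m (U x)"
      using AEm by (rule AE_mp) (auto intro!: AE_I2 simp: indicator_def)
  qed
  also have "\<dots> = (LINT u:{0..1}|lborel. indicator {..c} u * m u)"
    using mm by (intro U_int[OF Um Uu]) measurable
  finally have X: "(\<integral>x \<in> U -` {..c} \<inter> space M. Y x \<partial>M) = (LINT u:{0..1}|lborel. indicator {..c} u * m u)" .
  have "(\<integral>x. indicator {..c} (U x) * Y x \<partial>M) = (\<integral>x \<in> U -` {..c} \<inter> space M. Y x \<partial>M)"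
    unfolding set_lebesgue_integral_def by (intro Bochner_Integration.integral_cong) (auto simp: indicator_def)
  with X show "(\<integral>x. indicator {..c} (U x) * Y x \<partial>M) = (LINT u:{0..1}|lborel. indicator {..c} u * m u)"
    by simp
  have "integrable M (real_cond_exp M F Y)" using Yi by (rule real_cond_exp_int)
  then have "integrable M (\<lambda>x. m (U x))"
    by (rule integrable_cong_AE_imp) (use Um mm AEm in auto)
  then show "set_integrable lborel {0..1} m" by (rule U_integrable[OF Um Uu mm])
qed

lemma cexp_indep:
  fixes W :: "'a \<Rightarrow> real \<times> real \<times> real" and Z :: "'a \<Rightarrow> 'z::finite"
    and Phi :: "real \<times> real \<times> real \<Rightarrow> 'z \<Rightarrow> real"
  assumes P: "prob_space M" and I: "indep_rvs M (borel \<Otimes>\<^sub>M borel \<Otimes>\<^sub>M borel) W (count_space UNIV) Z"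
   and g: "\<And>z. (\<lambda>w. Phi w z) \<in> borel_measurable (borel \<Otimes>\<^sub>M borel \<Otimes>\<^sub>M borel)"
   and int: "\<And>z. integrable M (\<lambda>x. Phi (W x) z)"
  shows "cexp_ev M (\<lambda>x. Phi (W x) (Z x)) {x\<in>space M. Pz (Z x)} = cexp_ev M (\<lambda>x. \<integral>y. Phi (W y) (Z x) \<partial>M) {x\<in>space M. Pz (Z x)}"
proof -
  have "(\<integral>x. indicator {x\<in>space M. Pz (Z x)} x * Phi (W x) (Z x) \<partial>M) = (\<integral>x. Phi (W x) (Z x) * (if Pz (Z x) then 1 else 0) \<partial>M)"
    by (intro Bochner_Integration.integral_cong) (auto simp: indicator_def)
  also have "\<dots> = (\<integral>x. (\<integral>y. Phi (W y) (Z x) \<partial>M) * (if Pz (Z x) then 1 else 0) \<partial>M)"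
    by (rule indep_int2[OF P I g int])
  also have "\<dots> = (\<integral>x. indicator {x\<in>space M. Pz (Z x)} x * (\<integral>y. Phi (W y) (Z x) \<partial>M) \<partial>M)"
    by (intro Bochner_Integration.integral_cong) (auto simp: indicator_def)
  finally show ?thesis unfolding cexp_ev_def by simp
qed

lemma diffZ_indep:
  fixes W :: "'a \<Rightarrow> real \<times> real \<times> real" and Z :: "'a \<Rightarrow> 'z::finite \<Rightarrow> bool"
    and Phi :: "real \<times> real \<times> real \<Rightarrow> ('z \<Rightarrow> bool) \<Rightarrow> real"
  assumes P: "prob_space M" and I: "indep_rvs M (borel \<Otimes>\<^sub>M borel \<Otimes>\<^sub>M borel) W (count_space UNIV) Z"
   and g: "\<And>z. (\<lambda>w. Phi w z) \<in> borel_measurable (borel \<Otimes>\<^sub>M borel \<Otimes>\<^sub>M borel)"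
   and int: "\<And>z. integrable M (\<lambda>x. Phi (W x) z)"
  shows "diffZ M Z (\<lambda>x. Phi (W x) (Z x)) l = diffZ M Z (\<lambda>x. \<integral>y. Phi (W y) (Z x) \<partial>M) l"
  unfolding diffZ_def
  using cexp_indep[where Phi=Phi and W=W and Z=Z, OF P I g int, where Pz="\<lambda>z. z l"]
    cexp_indep[where Phi=Phi and W=W and Z=Z, OF P I g int, where Pz="\<lambda>z. \<not> z l"] by simp

lemma diffZ_fin:
  fixes Z :: "'a \<Rightarrow> 'z::finite \<Rightarrow> bool" and F :: "('z \<Rightarrow> bool) \<Rightarrow> real"
  assumes P: "prob_space M" and Zm: "Z \<in> measurable M (count_space UNIV)"
  shows "diffZ M Z (\<lambda>x. F (Z x)) l = (\<Sum>z\<in>UNIV.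
     ((if z l then measure M {x\<in>space M. Z x = z} / measure M {x\<in>space M. Z x l} else 0)
    - (if \<not> z l then measure M {x\<in>space M. Z x = z} / measure M {x\<in>space M. \<not> Z x l} else 0)) * F z)"
proof -
  have c: "cexp_ev M (\<lambda>x. F (Z x)) {x\<in>space M. Pz (Z x)} =
     (\<Sum>z\<in>UNIV. (if Pz z then measure M {x\<in>space M. Z x = z} / measure M {x\<in>space M. Pz (Z x)} else 0) * F z)" for Pz
  proof -
    have "(\<integral>x. indicator {x\<in>space M. Pz (Z x)} x * F (Z x) \<partial>M) = (\<integral>x. (\<lambda>z. (if Pz z then 1 else 0) * F z) (Z x) \<partial>M)"
      by (intro Bochner_Integration.integral_cong) (auto simp: indicator_def)
    also have "\<dots> = (\<Sum>z\<in>UNIV. measure M {x\<in>space M. Z x = z} * ((if Pz z then 1 else 0) * F z))"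
      by (rule fin_int[OF P Zm])
    finally have e: "(\<integral>x. indicator {x\<in>space M. Pz (Z x)} x * F (Z x) \<partial>M) = (\<Sum>z\<in>UNIV. measure M {x\<in>space M. Z x = z} * ((if Pz z then 1 else 0) * F z))" .
    show ?thesis unfolding cexp_ev_def e sum_divide_distrib by (auto intro!: sum.cong)
  qed
  show ?thesis unfolding diffZ_def c[of "\<lambda>z. z l"] c[of "\<lambda>z. \<not> z l"]
    by (simp add: sum_subtractf[symmetric] left_diff_distrib)
qed

definition bnd :: "(real \<Rightarrow> real) \<Rightarrow> bool" where
  "bnd f \<longleftrightarrow> f \<in> borel_measurable borel \<and> (\<exists>B. \<forall>u\<in>{0..1}. \<bar>f u\<bar> \<le> B)"

lemma si_const: "set_integrable lborel {0..1::real} (\<lambda>_. c :: real)"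
  by (rule borel_integrable_atLeastAtMost') (rule continuous_on_const)

lemma bnd_si:
  assumes "bnd f" shows "set_integrable lborel {0..1} f"
proof -
  obtain B where m: "f \<in> borel_measurable borel" and B: "\<And>u. u \<in> {0..1} \<Longrightarrow> \<bar>f u\<bar> \<le> B"
    using assms unfolding bnd_def by blast
  show ?thesis
    by (rule set_integrable_bound[OF si_const[of B]]) (use m B in \<open>auto intro!: AE_I2 simp: set_borel_measurable_def intro: order.trans[OF _ abs_ge_self]\<close>)
qed

lemma bnd_mult_si:
  assumes g: "set_integrable lborel {0..1} g" and f: "bnd f"
  shows "set_integrable lborel {0..1} (\<lambda>u. g u * f u)"
proof -
  obtain B where m: "f \<in> borel_measurable borel" and B: "\<And>u. u \<in> {0..1} \<Longrightarrow> \<bar>f u\<bar> \<le> B"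
    using f unfolding bnd_def by blast
  have B0: "0 \<le> B" using B[of 0] by simp
  have gm: "(\<lambda>x. indicator {0..1} x *\<^sub>R g x) \<in> borel_measurable lborel"
    using g unfolding set_integrable_def by (rule borel_measurable_integrable)
  have gm': "(\<lambda>x. (indicator {0..1} x *\<^sub>R g x) * f x) \<in> borel_measurable lborel"
    using gm m by measurable
  show ?thesis
  proof (rule set_integrable_bound[OF set_integrable_mult_right[OF g, of B]])
    show "set_borel_measurable lborel {0..1} (\<lambda>u. g u * f u)"
      unfolding set_borel_measurable_def using gm' by (simp add: ac_simps)
    show "AE x in lborel. x \<in> {0..1} \<longrightarrow> norm (g x * f x) \<le> norm (B * g x)"
      using B B0 by (auto intro!: AE_I2 mult_right_mono simp: abs_mult mult.commute)
  qed
qed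

lemma bnd_add: "bnd f \<Longrightarrow> bnd g \<Longrightarrow> bnd (\<lambda>u. f u + g u)"
  unfolding bnd_def
proof (elim conjE exE, intro conjI)
  fix B C assume "\<forall>u\<in>{0..1}. \<bar>f u\<bar> \<le> B" "\<forall>u\<in>{0..1}. \<bar>g u\<bar> \<le> C"
  then show "\<exists>B. \<forall>u\<in>{0..1}. \<bar>f u + g u\<bar> \<le> B"
    by (intro exI[of _ "B + C"]) (auto intro: order.trans[OF abs_triangle_ineq] add_mono)
qed auto

lemma bnd_diff: "bnd f \<Longrightarrow> bnd g \<Longrightarrow> bnd (\<lambda>u. f u - g u)"
  unfolding bnd_def
proof (elim conjE exE, intro conjI)
  fix B C assume "\<forall>u\<in>{0..1}. \<bar>f u\<bar> \<le> B" "\<forall>u\<in>{0..1}. \<bar>g u\<bar> \<le> C"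
  then show "\<exists>B. \<forall>u\<in>{0..1}. \<bar>f u - g u\<bar> \<le> B"
    by (intro exI[of _ "B + C"]) (auto intro: order.trans[OF abs_triangle_ineq4] add_mono)
qed auto

lemma bnd_mult: "bnd f \<Longrightarrow> bnd g \<Longrightarrow> bnd (\<lambda>u. f u * g u)"
  unfolding bnd_def
proof (elim conjE exE, intro conjI)
  fix B C assume B: "\<forall>u\<in>{0..1}. \<bar>f u\<bar> \<le> B" and C: "\<forall>u\<in>{0..1}. \<bar>g u\<bar> \<le> C"
  then show "\<exists>B. \<forall>u\<in>{0..1}. \<bar>f u * g u\<bar> \<le> B"
    by (intro exI[of _ "B * C"]) (auto simp: abs_mult intro!: mult_mono)
qed auto

lemma bnd_const: "bnd (\<lambda>u. c)"
  unfolding bnd_def by auto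

lemma bnd_cmult: "bnd f \<Longrightarrow> bnd (\<lambda>u. c * f u)"
  using bnd_mult[OF bnd_const] by blast

lemma bnd_divide: "bnd f \<Longrightarrow> bnd (\<lambda>u. f u / c)"
  using bnd_mult[OF _ bnd_const, of f "1/c"] by simp

lemma bnd_sum: "finite I \<Longrightarrow> (\<And>i. i \<in> I \<Longrightarrow> bnd (f i)) \<Longrightarrow> bnd (\<lambda>u. \<Sum>i\<in>I. f i u)"
proof (induction I rule: finite_induct)
  case empty then show ?case using bnd_const[of 0] by simp
next
  case (insert x F) then show ?case using bnd_add[of "f x" "\<lambda>u. \<Sum>i\<in>F. f i u"] by simp
qed

lemma bnd_step: "bnd (\<lambda>u. if u \<le> c then 1 else 0)"
  unfolding bnd_def by (auto intro!: exI[of _ 1])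

lemma bnd_cong: "bnd f \<Longrightarrow> f = g \<Longrightarrow> bnd g" by simp

lemma si_sum:
  assumes "finite I" "\<And>i. i \<in> I \<Longrightarrow> set_integrable lborel {0..1::real} (f i)"
  shows "(LINT u:{0..1}|lborel. (\<Sum>i\<in>I. f i u)) = (\<Sum>i\<in>I. LINT u:{0..1}|lborel. f i u)"
  using assms unfolding set_lebesgue_integral_def set_integrable_def
  by (subst scaleR_sum_right) (rule Bochner_Integration.integral_sum)

lemma step_int:
  assumes "0 \<le> c" "c \<le> 1"
  shows "(LINT u:{0..1}|lborel. (if u \<le> c then 1 else 0 :: real)) = c"
proof -
  have "(LINT u:{0..1}|lborel. (if u \<le> c then 1 else 0 :: real)) = (\<integral>u. indicator {0..c} u \<partial>lborel)"
    unfolding set_lebesgue_integral_def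
    by (intro Bochner_Integration.integral_cong) (use assms in \<open>auto simp: indicator_def\<close>)
  also have "\<dots> = c" using assms by simp
  finally show ?thesis .
qed

lemma sq_int: "(LINT u:{0..1}|lborel. (u - 1/2)\<^sup>2) = (1/12 :: real)"
proof -
  have "(\<integral>x. indicator {0..1} x *\<^sub>R (x - 1/2)\<^sup>2 \<partial>lborel) = (1 - 1/2)^3/3 - (0 - 1/2)^3/(3::real)"
  proof (rule integral_FTC_atLeastAtMost[where F="\<lambda>x. (x - 1/2)^3/3"])
    fix x :: real
    show "((\<lambda>x. (x - 1/2)^3/3) has_vector_derivative (x - 1/2)\<^sup>2) (at x within {0..1})"
      unfolding has_real_derivative_iff_has_vector_derivative[symmetric]
      by (auto intro!: derivative_eq_intros simp: power2_eq_square)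
  qed (auto intro!: continuous_intros)
  moreover have "(1 - 1/2)^3/3 - (0 - 1/2)^3/(3::real) = 1/12" by (simp add: power3_eq_cube)
  ultimately show ?thesis unfolding set_lebesgue_integral_def by simp
qed

lemma cs_real:
  fixes a b c :: real
  assumes a: "0 \<le> a" and b: "0 \<le> b" and H: "\<And>s. 0 < s \<Longrightarrow> \<bar>c\<bar> \<le> (s * a + b / s) / 2"
  shows "\<bar>c\<bar> \<le> sqrt a * sqrt b"
proof (cases "a = 0 \<or> b = 0")
  case True
  show ?thesis
  proof (rule ccontr)
    assume "\<not> ?thesis"
    then have c0: "0 < \<bar>c\<bar>" using True by auto
    show False
    proof (cases "a = 0")
      case True
      define s where "s = b / \<bar>c\<bar> + 1"
      have s0: "0 < s" using b c0 by (simp add: s_def add_nonneg_pos)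
      have "\<bar>c\<bar> \<le> b / s / 2" using H[OF s0] True by simp
      moreover have "b / s < \<bar>c\<bar> * 2"
      proof -
        have "b < \<bar>c\<bar> * 2 * s" using c0 b by (simp add: s_def algebra_simps)
        then show ?thesis using s0 by (simp add: divide_less_eq)
      qed
      ultimately show False by simp
    next
      case False
      then have b0: "b = 0" using True by simp
      define s where "s = \<bar>c\<bar> / (a + 1)"
      have s0: "0 < s" using a c0 by (simp add: s_def)
      have "\<bar>c\<bar> \<le> s * a / 2" using H[OF s0] b0 by simp
      moreover have "s * a < \<bar>c\<bar>" using a c0 by (simp add: s_def field_simps)
      ultimately show False using c0 by simp
    qed
  qed
next
  case False
  then have a0: "0 < a" and b0: "0 < b" using a b by auto
  define s where "s = sqrt b / sqrt a"
  have s0: "0 < s" using a0 b0 by (simp add: s_def)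
  have "s * a = sqrt a * sqrt b"
    using a0 by (simp add: s_def field_simps; metis real_sqrt_pow2 a power2_eq_square)
  moreover have "b / s = sqrt a * sqrt b"
    using a0 b0 by (simp add: s_def field_simps; metis real_sqrt_pow2 b power2_eq_square)
  ultimately show ?thesis using H[OF s0] by simp
qed

lemma amgm2:
  fixes x y s :: real assumes s: "0 < s"
  shows "2 * (x * y) \<le> s * x\<^sup>2 + y\<^sup>2 / s" and "- (2 * (x * y)) \<le> s * x\<^sup>2 + y\<^sup>2 / s"
proof -
  have "0 \<le> (s * x - y)\<^sup>2 / s" using s by simp
  also have "(s * x - y)\<^sup>2 / s = s * x\<^sup>2 + y\<^sup>2 / s - 2 * (x * y)"
    using s by (simp add: field_simps power2_eq_square)
  finally show "2 * (x * y) \<le> s * x\<^sup>2 + y\<^sup>2 / s" by simp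
  have "0 \<le> (s * x + y)\<^sup>2 / s" using s by simp
  also have "(s * x + y)\<^sup>2 / s = s * x\<^sup>2 + y\<^sup>2 / s + 2 * (x * y)"
    using s by (simp add: field_simps power2_eq_square)
  finally show "- (2 * (x * y)) \<le> s * x\<^sup>2 + y\<^sup>2 / s" by simp
qed

lemma cs_int:
  assumes f: "bnd f" and e: "bnd e"
  shows "\<bar>LINT u:{0..1}|lborel. f u * e u\<bar> \<le> sqrt (LINT u:{0..1}|lborel. (f u)\<^sup>2) * sqrt (LINT u:{0..1}|lborel. (e u)\<^sup>2)"
proof (rule cs_real)
  have ff: "set_integrable lborel {0..1} (\<lambda>u. (f u)\<^sup>2)"
    using bnd_si[OF bnd_mult[OF f f]] by (simp add: power2_eq_square)
  have ee: "set_integrable lborel {0..1} (\<lambda>u. (e u)\<^sup>2)"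
    using bnd_si[OF bnd_mult[OF e e]] by (simp add: power2_eq_square)
  have fe: "set_integrable lborel {0..1} (\<lambda>u. f u * e u)"
    using bnd_si[OF bnd_mult[OF f e]] by simp
  show "0 \<le> (LINT u:{0..1}|lborel. (f u)\<^sup>2)"
    using set_integral_mono[OF si_const[of 0] ff] by simp
  show "0 \<le> (LINT u:{0..1}|lborel. (e u)\<^sup>2)"
    using set_integral_mono[OF si_const[of 0] ee] by simp
  fix s :: real assume s: "0 < s"
  have R: "(LINT u:{0..1}|lborel. (s * (f u)\<^sup>2 + (e u)\<^sup>2 / s) / 2)
      = (s * (LINT u:{0..1}|lborel. (f u)\<^sup>2) + (LINT u:{0..1}|lborel. (e u)\<^sup>2) / s) / 2"
    using ff ee by simp
  have Ri: "set_integrable lborel {0..1} (\<lambda>u. (s * (f u)\<^sup>2 + (e u)\<^sup>2 / s) / 2)"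
    using ff ee by simp
  have "(LINT u:{0..1}|lborel. 2 * (f u * e u)) \<le> (LINT u:{0..1}|lborel. s * (f u)\<^sup>2 + (e u)\<^sup>2 / s)"
    by (rule set_integral_mono) (use fe ff ee amgm2[OF s] in auto)
  moreover have "(LINT u:{0..1}|lborel. - (2 * (f u * e u))) \<le> (LINT u:{0..1}|lborel. s * (f u)\<^sup>2 + (e u)\<^sup>2 / s)"
    by (rule set_integral_mono) (use fe ff ee amgm2[OF s] bnd_si[OF bnd_cmult[OF bnd_mult[OF f e], of "-2"]] in auto)
  moreover have "(LINT u:{0..1}|lborel. s * (f u)\<^sup>2 + (e u)\<^sup>2 / s) = s * (LINT u:{0..1}|lborel. (f u)\<^sup>2) + (LINT u:{0..1}|lborel. (e u)\<^sup>2) / s"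
    using ff ee by simp
  moreover have "(LINT u:{0..1}|lborel. - (2 * (f u * e u))) = - (2 * (LINT u:{0..1}|lborel. f u * e u))"
    using fe by (simp add: set_integral_uminus)
  ultimately show "\<bar>LINT u:{0..1}|lborel. f u * e u\<bar> \<le> (s * (LINT u:{0..1}|lborel. (f u)\<^sup>2) + (LINT u:{0..1}|lborel. (e u)\<^sup>2) / s) / 2"
    by simp
qed

theorem proposition16:
  fixes M :: "'a measure"
    and Y0 Y1 U :: "'a \<Rightarrow> real"
    and Z :: "'a \<Rightarrow> ('L::finite \<Rightarrow> bool)"
    and V :: "('L \<Rightarrow> bool) \<Rightarrow> real"
    and Q0 Q1 :: "('L \<Rightarrow> bool) pmf"
    and w :: "'L \<Rightarrow> real"
    and m0 m1 :: "real \<Rightarrow> real"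
    and Mset :: "((real \<Rightarrow> real) \<times> (real \<Rightarrow> real)) set"
  assumes L2: "CARD('L) \<ge> 2"
    and P: "prob_space M"
    and Y0_rv: "Y0 \<in> borel_measurable M" and Y1_rv: "Y1 \<in> borel_measurable M"
    and Y0_sq: "integrable M (\<lambda>x. (Y0 x)\<^sup>2)" and Y1_sq: "integrable M (\<lambda>x. (Y1 x)\<^sup>2)"
    and U_rv: "U \<in> borel_measurable M"
    and Z_rv: "Z \<in> measurable M (count_space UNIV)"
    \<comment> \<open>(LI): U ~ Uniform(0,1), V takes values in [0,1] so that p(z) = V(z)\<close>
    and U_unif: "distr M lborel U = uniform_measure lborel {0..1}"
    and V_range: "\<And>z. V z \<in> {0..1}"
    \<comment> \<open>(A1): (Y(0), Y(1), D(.)) independent of Z; under (LI) D(.) is determined by U\<close>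
    and A1: "indep_rvs M (borel \<Otimes>\<^sub>M borel \<Otimes>\<^sub>M borel) (\<lambda>x. (Y0 x, Y1 x, U x))
               (count_space UNIV) Z"
    \<comment> \<open>(A2): monotonicity\<close>
    and A2: "\<And>z z'. (\<forall>l. z l \<longrightarrow> z' l) \<Longrightarrow> V z \<le> V z'"
    \<comment> \<open>(A3)\<close>
    and A3_p: "\<And>l. pz M Z l > 0"
    and A3_pi: "\<And>l. pi_fs M V U Z l > 0"
    and A3_Sigma: "SigmaZ_pd M Z"
    \<comment> \<open>Gamma^Wald positive definite\<close>
    and Gamma_pd: "pos_def (GammaWald M V U Z Y0 Y1)"
    \<comment> \<open>policy weights well defined\<close>
    and policy_nondeg: "(LINT t:{0..1}|lborel. Fpol V Q0 t - Fpol V Q1 t) \<noteq> 0"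
    \<comment> \<open>w is omega^PRTE\<close>
    and w_PRTE: "is_omega_PRTE M V U Z Y0 Y1 Q0 Q1 w"
    \<comment> \<open>true marginal treatment response functions m_d(u) = E[Y(d) | U = u]; MTE = m1 - m0\<close>
    and m0_def: "is_cond_mean_given M U Y0 m0"
    and m1_def: "is_cond_mean_given M U Y1 m1"
    and true_in: "(m0, m1) \<in> Mset"
  shows
    "(LINT u:{0..1}|lborel. efun M V Z Q0 Q1 w u) = 0
     \<and> beta_star M V U Z Y0 Y1 w - (LINT u:{0..1}|lborel. (m1 u - m0 u) * wP V Q0 Q1 u)
         = (LINT u:{0..1}|lborel. (m1 u - m0 u) * efun M V Z Q0 Q1 w u)
     \<and> (\<forall>B::real. (\<forall>u\<in>{0..1}. \<forall>v\<in>{0..1}. \<bar>(m1 u - m0 u) - (m1 v - m0 v)\<bar> \<le> B * \<bar>u - v\<bar>) \<longrightarrow>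
          \<bar>beta_star M V U Z Y0 Y1 w - (LINT u:{0..1}|lborel. (m1 u - m0 u) * wP V Q0 Q1 u)\<bar>
            \<le> B / (2 * sqrt 3) * sqrt (LINT u:{0..1}|lborel. (efun M V Z Q0 Q1 w u)\<^sup>2))
     \<and> (let MS = {(a, b) \<in> Mset. \<forall>l. (LINT u:{0..1}|lborel. (b u - a u) * hfun M V Z l u)
                                       = Wald M V U Z Y0 Y1 l};
            Dl = (\<lambda>(a, b). ereal (LINT u:{0..1}|lborel. (b u - a u) * efun M V Z Q0 Q1 w u))
        in ereal (beta_star M V U Z Y0 Y1 w - (LINT u:{0..1}|lborel. (m1 u - m0 u) * wP V Q0 Q1 u))
             \<in> {(INF p\<in>MS. Dl p) .. (SUP p\<in>MS. Dl p)})"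
proof -
  interpret prob_space M by (rule P)
  define W where "W = (\<lambda>x. (Y0 x, Y1 x, U x))"
  have I: "indep_rvs M (borel \<Otimes>\<^sub>M borel \<Otimes>\<^sub>M borel) W (count_space UNIV) Z" using A1 unfolding W_def .
  have Zm: "Z \<in> measurable M (count_space UNIV)" using A1 by (simp add: indep_rvs_def)
  have Y0i: "integrable M Y0" by (rule square_integrable_imp_integrable[OF Y0_rv Y0_sq])
  have Y1i: "integrable M Y1" by (rule square_integrable_imp_integrable[OF Y1_rv Y1_sq])
  have m0si: "set_integrable lborel {0..1} m0" by (rule cond_int(2)[OF P U_rv U_unif Y0_rv Y0i m0_def])
  have m1si: "set_integrable lborel {0..1} m1" by (rule cond_int(2)[OF P U_rv U_unif Y1_rv Y1i m1_def])
  have mtesi: "set_integrable lborel {0..1} (\<lambda>u. m1 u - m0 u)" using m0si m1si by simp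
  have m0m: "m0 \<in> borel_measurable borel" using m0_def unfolding is_cond_mean_given_def by simp
  have m1m: "m1 \<in> borel_measurable borel" using m1_def unfolding is_cond_mean_given_def by simp
  have condY: "(\<integral>x. (if U x \<le> c then 1 else 0) * Y x \<partial>M) = (LINT u:{0..1}|lborel. m u * (if u \<le> c then 1 else 0))"
    if "Y \<in> borel_measurable M" "integrable M Y" "is_cond_mean_given M U Y m" for c Y m
  proof -
    have "(\<integral>x. (if U x \<le> c then 1 else 0) * Y x \<partial>M) = (\<integral>x. indicator {..c} (U x) * Y x \<partial>M)"
      by (intro Bochner_Integration.integral_cong) (auto simp: indicator_def)
    also have "\<dots> = (LINT u:{0..1}|lborel. indicator {..c} u * m u)"
      by (rule cond_int(1)[OF P U_rv U_unif that])
    also have "\<dots> = (LINT u:{0..1}|lborel. m u * (if u \<le> c then 1 else 0))"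
      unfolding set_lebesgue_integral_def
      by (intro Bochner_Integration.integral_cong) (auto simp: indicator_def)
    finally show ?thesis .
  qed
  define G where "G c = (LINT u:{0..1}|lborel. (m1 u - m0 u) * (if u \<le> c then 1 else 0))" for c
  have Aset: "{x\<in>space M. P (Z x)} \<in> sets M" for P
    using measurable_sets[OF Zm, of "{z. P z}"] by (simp add: vimage_def Int_def conj_commute)
  have pA: "0 < measure M {x\<in>space M. Z x l}" for l using A3_p[of l] unfolding pz_def .
  have pnA: "0 < measure M {x\<in>space M. \<not> Z x l}" for l
  proof -
    define c where "c = (\<lambda>k. if k = l then 1 else (0::real))"
    have "c \<noteq> (\<lambda>_. 0)" unfolding c_def by (auto dest: fun_cong[of _ _ l])
    then have "0 < (\<Sum>l'\<in>UNIV. \<Sum>k\<in>UNIV. c l' * c k * covar M (Zr Z l') (Zr Z k))"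
      using A3_Sigma unfolding SigmaZ_pd_def by blast
    also have "(\<Sum>l'\<in>UNIV. \<Sum>k\<in>UNIV. c l' * c k * covar M (Zr Z l') (Zr Z k)) = covar M (Zr Z l) (Zr Z l)"
    proof -
      have "(\<Sum>k\<in>UNIV. c l' * c k * covar M (Zr Z l') (Zr Z k)) = (if l' = l then covar M (Zr Z l') (Zr Z l) else 0)" for l'
      proof -
        have "(\<Sum>k\<in>UNIV. c l' * c k * covar M (Zr Z l') (Zr Z k)) = (\<Sum>k\<in>UNIV. if k = l then c l' * covar M (Zr Z l') (Zr Z k) else 0)"
          by (intro sum.cong) (auto simp: c_def)
        then show ?thesis by (simp add: c_def)
      qed
      then show ?thesis by simp
    qed
    also have "(\<integral>x. Zr Z l x \<partial>M) = measure M {x\<in>space M. Z x l}"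
    proof -
      have "(\<integral>x. Zr Z l x \<partial>M) = (\<integral>x. indicator {x\<in>space M. Z x l} x \<partial>M)"
        unfolding Zr_def by (intro Bochner_Integration.integral_cong) (auto simp: indicator_def)
      then show ?thesis using Aset by simp
    qed
    then have "covar M (Zr Z l) (Zr Z l) = measure M {x\<in>space M. Z x l} - (measure M {x\<in>space M. Z x l})\<^sup>2"
      unfolding covar_def by (simp add: Zr_def power2_eq_square if_distrib cong: if_cong)
    finally have "measure M {x\<in>space M. Z x l} < 1"
      using pA[of l] by (simp add: power2_eq_square)
    moreover have "{x\<in>space M. \<not> Z x l} = space M - {x\<in>space M. Z x l}" by auto
    ultimately show ?thesis using prob_compl[OF Aset[of "\<lambda>z. z l"]] by simp
  qed
  define cw where "cw l z = ((if z l then measure M {x\<in>space M. Z x = z} / measure M {x\<in>space M. Z x l} else 0)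
    - (if \<not> z l then measure M {x\<in>space M. Z x = z} / measure M {x\<in>space M. \<not> Z x l} else 0))" for l z
  have dfin: "diffZ M Z (\<lambda>x. F (Z x)) l = (\<Sum>z\<in>UNIV. cw l z * F z)" for F l
    unfolding cw_def by (rule diffZ_fin[OF P Zm])
  have cw0: "(\<Sum>z\<in>UNIV. cw l z) = 0" for l
  proof -
    have ce1: "cexp_ev M (\<lambda>x. 1) {x\<in>space M. P (Z x)} = 1" if "0 < measure M {x\<in>space M. P (Z x)}" for P
      unfolding cexp_ev_def using Aset[of P] that by simp
    have "diffZ M Z (\<lambda>x. (\<lambda>_. 1) (Z x)) l = 0"
      unfolding diffZ_def using ce1[of "\<lambda>z. z l"] ce1[of "\<lambda>z. \<not> z l"] pA pnA by simp
    then show ?thesis using dfin[of "\<lambda>_. 1" l] by simp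
  qed
  have piV: "diffZ M Z (\<lambda>x. V (Z x)) l = pi_fs M V U Z l" for l
  proof -
    define PhiD where "PhiD = (\<lambda>(w::real\<times>real\<times>real) z. if snd (snd w) \<le> V z then 1 else (0::real))"
    have PDm: "(\<lambda>w. PhiD w z) \<in> borel_measurable (borel \<Otimes>\<^sub>M borel \<Otimes>\<^sub>M borel)" for z
      unfolding PhiD_def by measurable
    have Wm: "W \<in> measurable M (borel \<Otimes>\<^sub>M borel \<Otimes>\<^sub>M borel)" using I by (simp add: indep_rvs_def)
    have PDi: "integrable M (\<lambda>x. PhiD (W x) z)" for z
      using measurable_compose[OF Wm PDm[of z]]
      by (intro integrable_const_bound[where B=1]) (auto simp: PhiD_def)
    have "pi_fs M V U Z l = diffZ M Z (\<lambda>x. PhiD (W x) (Z x)) l"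
      unfolding pi_fs_def Dobs_def PhiD_def W_def by simp
    also have "\<dots> = diffZ M Z (\<lambda>x. \<integral>y. PhiD (W y) (Z x) \<partial>M) l"
      by (rule diffZ_indep[OF P I PDm PDi])
    also have "(\<lambda>x. \<integral>y. PhiD (W y) (Z x) \<partial>M) = (\<lambda>x. V (Z x))"
    proof
      fix x
      have "(\<integral>y. PhiD (W y) (Z x) \<partial>M) = (\<integral>y. (\<lambda>u. if u \<le> V (Z x) then 1 else 0) (U y) \<partial>M)"
        unfolding PhiD_def W_def by simp
      also have "\<dots> = (LINT u:{0..1}|lborel. (if u \<le> V (Z x) then 1 else 0 :: real))"
        by (rule U_int[OF U_rv U_unif]) measurable
      also have "\<dots> = V (Z x)" using V_range[of "Z x"] by (intro step_int) auto
      finally show "(\<integral>y. PhiD (W y) (Z x) \<partial>M) = V (Z x)" .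
    qed
    finally show ?thesis by simp
  qed
  have piS: "pi_fs M V U Z l = (\<Sum>z\<in>UNIV. cw l z * V z)" for l
    using piV[of l] dfin[of V l] by simp
  have rhoS: "rho_rf M V U Z Y0 Y1 l = (\<Sum>z\<in>UNIV. cw l z * G (V z))" for l
  proof -
    define PhiY where "PhiY = (\<lambda>(w::real\<times>real\<times>real) z. (if snd (snd w) \<le> V z then 1 else (0::real)) * fst (snd w)
        + (1 - (if snd (snd w) \<le> V z then 1 else (0::real))) * fst w)"
    have PYm: "(\<lambda>w. PhiY w z) \<in> borel_measurable (borel \<Otimes>\<^sub>M borel \<Otimes>\<^sub>M borel)" for z
      unfolding PhiY_def by measurable
    have Wm: "W \<in> measurable M (borel \<Otimes>\<^sub>M borel \<Otimes>\<^sub>M borel)" using I by (simp add: indep_rvs_def)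
    have PYi: "integrable M (\<lambda>x. PhiY (W x) z)" for z
    proof (rule Bochner_Integration.integrable_bound)
      show "integrable M (\<lambda>x. \<bar>Y0 x\<bar> + \<bar>Y1 x\<bar>)" using Y0i Y1i by auto
      show "(\<lambda>x. PhiY (W x) z) \<in> borel_measurable M" using measurable_compose[OF Wm PYm[of z]] by simp
      show "AE x in M. norm (PhiY (W x) z) \<le> norm (\<bar>Y0 x\<bar> + \<bar>Y1 x\<bar>)"
        by (intro AE_I2) (auto simp: PhiY_def W_def)
    qed
    have ind_int: "integrable M (\<lambda>x. (if U x \<le> c then 1 else 0) * Y x)" if "integrable M Y" for Y :: "'a \<Rightarrow> real" and c :: real
    proof (rule Bochner_Integration.integrable_bound[OF that])
      show "(\<lambda>x. (if U x \<le> c then 1 else 0) * Y x) \<in> borel_measurable M"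
        using U_rv borel_measurable_integrable[OF that] by measurable
      show "AE x in M. norm ((if U x \<le> c then 1 else 0) * Y x) \<le> norm (Y x)"
        by (intro AE_I2) auto
    qed
    have "rho_rf M V U Z Y0 Y1 l = diffZ M Z (\<lambda>x. PhiY (W x) (Z x)) l"
      unfolding rho_rf_def Yobs_def Dobs_def PhiY_def W_def by simp
    also have "\<dots> = diffZ M Z (\<lambda>x. \<integral>y. PhiY (W y) (Z x) \<partial>M) l"
      by (rule diffZ_indep[OF P I PYm PYi])
    also have "(\<lambda>x. \<integral>y. PhiY (W y) (Z x) \<partial>M) = (\<lambda>x. (\<lambda>z. (\<integral>y. Y0 y \<partial>M) + G (V z)) (Z x))"
    proof
      fix x
      define c where "c = V (Z x)"
      have "(\<integral>y. PhiY (W y) (Z x) \<partial>M) = (\<integral>y. Y0 y + ((if U y \<le> c then 1 else 0) * Y1 y - (if U y \<le> c then 1 else 0) * Y0 y) \<partial>M)"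
        unfolding PhiY_def W_def c_def by (intro Bochner_Integration.integral_cong) (auto simp: algebra_simps)
      also have "\<dots> = (\<integral>y. Y0 y \<partial>M) + ((\<integral>y. (if U y \<le> c then 1 else 0) * Y1 y \<partial>M) - (\<integral>y. (if U y \<le> c then 1 else 0) * Y0 y \<partial>M))"
        using Y0i ind_int[OF Y0i, of c] ind_int[OF Y1i, of c] by simp
      also have "\<dots> = (\<integral>y. Y0 y \<partial>M) + ((LINT u:{0..1}|lborel. m1 u * (if u \<le> c then 1 else 0)) - (LINT u:{0..1}|lborel. m0 u * (if u \<le> c then 1 else 0)))"
        using condY[OF Y0_rv Y0i m0_def, of c] condY[OF Y1_rv Y1i m1_def, of c] by simp
      also have "\<dots> = (\<integral>y. Y0 y \<partial>M) + G c"
        unfolding G_def left_diff_distrib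
        using bnd_mult_si[OF m0si bnd_step[of c]] bnd_mult_si[OF m1si bnd_step[of c]] by simp
      finally show "(\<integral>y. PhiY (W y) (Z x) \<partial>M) = (\<lambda>z. (\<integral>y. Y0 y \<partial>M) + G (V z)) (Z x)" by (simp add: c_def)
    qed
    also have "diffZ M Z (\<lambda>x. (\<lambda>z. (\<integral>y. Y0 y \<partial>M) + G (V z)) (Z x)) l = (\<Sum>z\<in>UNIV. cw l z * ((\<integral>y. Y0 y \<partial>M) + G (V z)))"
      by (rule dfin)
    also have "\<dots> = (\<integral>y. Y0 y \<partial>M) * (\<Sum>z\<in>UNIV. cw l z) + (\<Sum>z\<in>UNIV. cw l z * G (V z))"
      by (simp add: algebra_simps sum.distrib sum_distrib_left)
    finally show ?thesis using cw0[of l] by simp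
  qed
  have pipos: "0 < pi_fs M V U Z l" for l by (rule A3_pi)
  have hS: "hfun M V Z l = (\<lambda>u. (\<Sum>z\<in>UNIV. cw l z * (if u \<le> V z then 1 else 0)) / pi_fs M V U Z l)" for l
  proof
    fix u
    show "hfun M V Z l u = (\<Sum>z\<in>UNIV. cw l z * (if u \<le> V z then 1 else 0)) / pi_fs M V U Z l"
      unfolding hfun_def piV dfin[of "\<lambda>z. if u \<le> V z then 1 else 0" l] ..
  qed
  have bnd_h: "bnd (hfun M V Z l)" for l
    unfolding hS by (intro bnd_divide bnd_sum bnd_cmult bnd_step) auto
  have key: "(LINT u:{0..1}|lborel. (m1 u - m0 u) * hfun M V Z l u) = Wald M V U Z Y0 Y1 l" for l
  proof -
    have "(LINT u:{0..1}|lborel. (m1 u - m0 u) * hfun M V Z l u)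
       = (LINT u:{0..1}|lborel. (\<Sum>z\<in>UNIV. (cw l z / pi_fs M V U Z l) * ((m1 u - m0 u) * (if u \<le> V z then 1 else 0))))"
      unfolding hS set_lebesgue_integral_def
      by (intro Bochner_Integration.integral_cong refl arg_cong2[where f="(*\<^sub>R)"]) (simp add: sum_distrib_left sum_divide_distrib mult_ac)
    also have "\<dots> = (\<Sum>z\<in>UNIV. (cw l z / pi_fs M V U Z l) * G (V z))"
      unfolding G_def
      by (subst si_sum) (auto intro!: set_integrable_mult_right bnd_mult_si[OF mtesi bnd_step])
    also have "\<dots> = rho_rf M V U Z Y0 Y1 l / pi_fs M V U Z l"
      unfolding rhoS by (simp add: sum_divide_distrib)
    finally show ?thesis unfolding Wald_def by (simp add: pi_fs_def rho_rf_def)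
  qed
  have inth: "(LINT u:{0..1}|lborel. hfun M V Z l u) = 1" for l
  proof -
    have "(LINT u:{0..1}|lborel. hfun M V Z l u)
       = (LINT u:{0..1}|lborel. (\<Sum>z\<in>UNIV. (cw l z / pi_fs M V U Z l) * (if u \<le> V z then 1 else 0)))"
      unfolding hS by (simp add: sum_divide_distrib)
    also have "\<dots> = (\<Sum>z\<in>UNIV. (cw l z / pi_fs M V U Z l) * (LINT u:{0..1}|lborel. (if u \<le> V z then 1 else 0 :: real)))"
      by (subst si_sum) (auto intro!: set_integrable_mult_right bnd_si[OF bnd_step])
    also have "\<dots> = (\<Sum>z\<in>UNIV. (cw l z / pi_fs M V U Z l) * V z)"
      using V_range by (intro sum.cong refl arg_cong2[where f="(*)"] step_int) auto
    also have "\<dots> = (\<Sum>z\<in>UNIV. cw l z * V z) / pi_fs M V U Z l"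
      by (simp add: sum_divide_distrib)
    also have "\<dots> = 1" using piS[of l] pipos[of l] by simp
    finally show ?thesis .
  qed
  have wsum: "sum w UNIV = 1"
    using w_PRTE unfolding is_omega_PRTE_def Sset_def prob_simplex_def by blast
  have hbS: "hbar M V Z w = (\<lambda>u. \<Sum>l\<in>UNIV. w l * hfun M V Z l u)"
    unfolding hbar_def ..
  have bnd_hb: "bnd (hbar M V Z w)"
    unfolding hbS by (intro bnd_sum bnd_cmult bnd_h) auto
  have int_hb: "(LINT u:{0..1}|lborel. hbar M V Z w u) = 1"
    unfolding hbS using wsum
    by (subst si_sum) (auto intro!: set_integrable_mult_right bnd_si[OF bnd_h] simp: inth)
  have key_hb: "(LINT u:{0..1}|lborel. (m1 u - m0 u) * hbar M V Z w u) = beta_star M V U Z Y0 Y1 w"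
  proof -
    have "(LINT u:{0..1}|lborel. (m1 u - m0 u) * hbar M V Z w u)
      = (LINT u:{0..1}|lborel. (\<Sum>l\<in>UNIV. w l * ((m1 u - m0 u) * hfun M V Z l u)))"
      unfolding hbS by (simp add: sum_distrib_left mult_ac)
    also have "\<dots> = (\<Sum>l\<in>UNIV. w l * Wald M V U Z Y0 Y1 l)"
      by (subst si_sum) (auto intro!: set_integrable_mult_right bnd_mult_si[OF mtesi bnd_h] simp: key)
    finally show ?thesis unfolding beta_star_def .
  qed
  have FS: "Fpol V Q = (\<lambda>u. \<Sum>z\<in>UNIV. pmf Q z * (if u \<le> V z then 1 else 0))" for Q
  proof
    fix u
    have "Fpol V Q u = sum (pmf Q) {z\<in>UNIV. u \<le> V z}"
      unfolding Fpol_def by (simp add: measure_measure_pmf_finite)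
    also have "\<dots> = (\<Sum>z\<in>UNIV. if u \<le> V z then pmf Q z else 0)"
      by (rule sum.inter_filter) simp
    finally show "Fpol V Q u = (\<Sum>z\<in>UNIV. pmf Q z * (if u \<le> V z then 1 else 0))"
      by (simp add: if_distrib cong: if_cong)
  qed
  have bnd_F: "bnd (Fpol V Q)" for Q
    unfolding FS by (intro bnd_sum bnd_cmult bnd_step) auto
  define K where "K = (LINT t:{0..1}|lborel. Fpol V Q0 t - Fpol V Q1 t)"
  have wPS: "wP V Q0 Q1 = (\<lambda>u. (Fpol V Q0 u - Fpol V Q1 u) / K)"
    unfolding wP_def K_def ..
  have bnd_wP: "bnd (wP V Q0 Q1)"
    unfolding wPS by (intro bnd_divide bnd_diff bnd_F)
  have int_wP: "(LINT u:{0..1}|lborel. wP V Q0 Q1 u) = 1"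
    unfolding wPS using policy_nondeg by (simp add: K_def)
  have eS: "efun M V Z Q0 Q1 w = (\<lambda>u. hbar M V Z w u - wP V Q0 Q1 u)"
    unfolding efun_def ..
  have bnd_e: "bnd (efun M V Z Q0 Q1 w)"
    unfolding eS by (intro bnd_diff bnd_hb bnd_wP)
  have part1: "(LINT u:{0..1}|lborel. efun M V Z Q0 Q1 w u) = 0"
    unfolding eS using bnd_si[OF bnd_hb] bnd_si[OF bnd_wP] int_hb int_wP by simp
  have part2: "beta_star M V U Z Y0 Y1 w - (LINT u:{0..1}|lborel. (m1 u - m0 u) * wP V Q0 Q1 u)
         = (LINT u:{0..1}|lborel. (m1 u - m0 u) * efun M V Z Q0 Q1 w u)"
    unfolding eS key_hb[symmetric] right_diff_distrib
    using bnd_mult_si[OF mtesi bnd_hb] bnd_mult_si[OF mtesi bnd_wP] by simp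
  have part3: "\<bar>beta_star M V U Z Y0 Y1 w - (LINT u:{0..1}|lborel. (m1 u - m0 u) * wP V Q0 Q1 u)\<bar>
            \<le> B / (2 * sqrt 3) * sqrt (LINT u:{0..1}|lborel. (efun M V Z Q0 Q1 w u)\<^sup>2)"
    if Lip: "\<forall>u\<in>{0..1}. \<forall>v\<in>{0..1}. \<bar>(m1 u - m0 u) - (m1 v - m0 v)\<bar> \<le> B * \<bar>u - v\<bar>" for B :: real
  proof -
    define c0 where "c0 = m1 (1/2) - m0 (1/2)"
    define f where "f u = (m1 u - m0 u) - c0" for u
    have fb: "\<bar>f u\<bar> \<le> B * \<bar>u - 1/2\<bar>" if "u \<in> {0..1}" for u
      using Lip that unfolding f_def c0_def by auto
    have B0: "0 \<le> B" using fb[of 0] by simp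
    have bnd_f: "bnd f"
      unfolding bnd_def
    proof (intro conjI exI)
      show "f \<in> borel_measurable borel" unfolding f_def using m0m m1m by measurable
      show "\<forall>u\<in>{0..1}. \<bar>f u\<bar> \<le> B"
      proof
        fix u :: real assume u: "u \<in> {0..1}"
        have "\<bar>u - 1/2\<bar> \<le> 1" using u by auto
        then have "B * \<bar>u - 1/2\<bar> \<le> B * 1" using B0 by (intro mult_left_mono) auto
        then show "\<bar>f u\<bar> \<le> B" using fb[OF u] by simp
      qed
    qed
    define e where "e = efun M V Z Q0 Q1 w"
    have "(LINT u:{0..1}|lborel. (m1 u - m0 u) * e u) = (LINT u:{0..1}|lborel. f u * e u + c0 * e u)"
      unfolding f_def by (simp add: algebra_simps)
    also have "\<dots> = (LINT u:{0..1}|lborel. f u * e u)"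
      using bnd_si[OF bnd_mult[OF bnd_f bnd_e]] bnd_si[OF bnd_e] part1 by (simp add: e_def)
    finally have D: "(LINT u:{0..1}|lborel. (m1 u - m0 u) * e u) = (LINT u:{0..1}|lborel. f u * e u)" .
    have CS: "\<bar>LINT u:{0..1}|lborel. f u * e u\<bar> \<le> sqrt (LINT u:{0..1}|lborel. (f u)\<^sup>2) * sqrt (LINT u:{0..1}|lborel. (e u)\<^sup>2)"
      unfolding e_def by (rule cs_int[OF bnd_f bnd_e])
    have "(LINT u:{0..1}|lborel. (f u)\<^sup>2) \<le> (LINT u:{0..1}|lborel. B\<^sup>2 * (u - 1/2)\<^sup>2)"
    proof (rule set_integral_mono)
      show "set_integrable lborel {0..1} (\<lambda>u. (f u)\<^sup>2)"
        using bnd_si[OF bnd_mult[OF bnd_f bnd_f]] by (simp add: power2_eq_square)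
      show "set_integrable lborel {0..1} (\<lambda>u. B\<^sup>2 * (u - 1/2)\<^sup>2)"
        by (rule borel_integrable_atLeastAtMost') (intro continuous_intros)
      fix u :: real assume u: "u \<in> {0..1}"
      have "\<bar>f u\<bar>\<^sup>2 \<le> (B * \<bar>u - 1/2\<bar>)\<^sup>2" by (rule power_mono[OF fb[OF u]]) simp
      then show "(f u)\<^sup>2 \<le> B\<^sup>2 * (u - 1/2)\<^sup>2" by (simp add: power_mult_distrib)
    qed
    also have "\<dots> = B\<^sup>2 / 12" using sq_int by simp
    finally have a: "(LINT u:{0..1}|lborel. (f u)\<^sup>2) \<le> B\<^sup>2 / 12" .
    have "sqrt (B\<^sup>2 / 12) = B / (2 * sqrt 3)"
    proof -
      have "sqrt (12::real) = 2 * sqrt 3"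
        using real_sqrt_mult[of 4 3] by simp
      then show ?thesis using B0 by (simp add: real_sqrt_divide)
    qed
    then have sa: "sqrt (LINT u:{0..1}|lborel. (f u)\<^sup>2) \<le> B / (2 * sqrt 3)"
      using a by (metis real_sqrt_le_mono)
    have "\<bar>LINT u:{0..1}|lborel. f u * e u\<bar> \<le> B / (2 * sqrt 3) * sqrt (LINT u:{0..1}|lborel. (e u)\<^sup>2)"
    proof -
      have "0 \<le> (LINT u:{0..1}|lborel. (e u)\<^sup>2)"
        using set_integral_mono[OF si_const[of 0] bnd_si[OF bnd_mult[OF bnd_e bnd_e]]]
        by (simp add: e_def power2_eq_square)
      then have "0 \<le> sqrt (LINT u:{0..1}|lborel. (e u)\<^sup>2)" by simp
      then show ?thesis using CS sa by (meson mult_right_mono order.trans)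
    qed
    then show ?thesis using part2 D by (simp add: e_def)
  qed
  have part4: "(let MS = {(a, b) \<in> Mset. \<forall>l. (LINT u:{0..1}|lborel. (b u - a u) * hfun M V Z l u)
                                       = Wald M V U Z Y0 Y1 l};
            Dl = (\<lambda>(a, b). ereal (LINT u:{0..1}|lborel. (b u - a u) * efun M V Z Q0 Q1 w u))
        in ereal (beta_star M V U Z Y0 Y1 w - (LINT u:{0..1}|lborel. (m1 u - m0 u) * wP V Q0 Q1 u))
             \<in> {(INF p\<in>MS. Dl p) .. (SUP p\<in>MS. Dl p)})"
  proof -
    define MS where "MS = {(a, b) \<in> Mset. \<forall>l. (LINT u:{0..1}|lborel. (b u - a u) * hfun M V Z l u)
                                       = Wald M V U Z Y0 Y1 l}"
    define Dl where "Dl = (\<lambda>(a::real\<Rightarrow>real, b::real\<Rightarrow>real). ereal (LINT u:{0..1}|lborel. (b u - a u) * efun M V Z Q0 Q1 w u))"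
    have inMS: "(m0, m1) \<in> MS" unfolding MS_def using true_in key by simp
    have eq: "Dl (m0, m1) = ereal (beta_star M V U Z Y0 Y1 w - (LINT u:{0..1}|lborel. (m1 u - m0 u) * wP V Q0 Q1 u))"
      unfolding Dl_def part2 by simp
    have "ereal (beta_star M V U Z Y0 Y1 w - (LINT u:{0..1}|lborel. (m1 u - m0 u) * wP V Q0 Q1 u))
             \<in> {(INF p\<in>MS. Dl p) .. (SUP p\<in>MS. Dl p)}"
      unfolding eq[symmetric] using inMS by (auto intro: INF_lower SUP_upper)
    then show ?thesis unfolding MS_def Dl_def Let_def .
  qed
  show ?thesis using part1 part2 part3 part4 by blast
qed

end
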